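(* Let $I$ be a finite set of players. For each $\nu\in I$ let $X_\nu\subset\mathbb{R}^{n_\nu}$, let $\succeq_\nu$ be a binary relation on $\mathbb{R}^n=\prod_{\nu\in I}\mathbb{R}^{n_\nu}$, and let $K_\nu:X_{-\nu}\rightrightarrows X_\nu$ be a set-valued map, where $X_{-\nu}=\prod_{j\neq\nu}X_j$. Set $X=\prod_{\nu\in I}X_\nu$ and $K(x)=\prod_{\nu\in I}K_\nu(x^{-\nu})$. Assume that for each $\nu\in I$: (1) $K_\nu$ has non-empty, closed and convex values; (2) $U^s_\nu(x)$ is convex for all $x\in\mathbb{R}^n$; (3) $x^\nu\in\operatorname{cl}(U^s_\nu(x))$ for all $x\in\mathbb{R}^n$. Define $N_0:\mathbb{R}^n\rightrightarrows\mathbb{R}^n$ by $N_0(x)=\prod_{\nu\in I}\big(N_\nu(x)\setminus\{0\}\big)$. If $\hat x$ is a generalized Nash equilibrium, then $\hat x$ solves the Stampacchia quasivariational inequality problem associated to $N_0$ and $K$, i.e. $\hat x\in K(\hat x)$ and there exists $\hat x^*\in N_0(\hat x)$ with $\langle\hat x^*,y-\hat x\rangle\ge0$ for all $y\in K(\hat x)$.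
   Context: Vectors $x\in\mathbb{R}^n$ are written $x=(x^\nu,x^{-\nu})$ with $x^\nu\in\mathbb{R}^{n_\nu}$ and $x^{-\nu}$ the components of the other players. For $w^{-\nu}$, the induced relation on $\mathbb{R}^{n_\nu}$ is $x^\nu\succeq_{\nu,w^{-\nu}}y^\nu$ iff $(x^\nu,w^{-\nu})\succeq_\nu(y^\nu,w^{-\nu})$, and $\succ_{\nu,w^{-\nu}}$ denotes its asymmetric part ($a\succ b$ iff $a\succeq b$ and not $b\succeq a$). For $x\in\mathbb{R}^n$, $U^s_\nu(x)=\{y^\nu\in\mathbb{R}^{n_\nu}: y^\nu\succ_{\nu,x^{-\nu}}x^\nu\}$. For $A\subset\mathbb{R}^m$ and $z\in\mathbb{R}^m$ (no convexity, closedness or membership $z\in A$ required), the normal cone is $\mathscr{N}_A(z)=\{z^*\in\mathbb{R}^m:\langle z^*,y-z\rangle\le 0\ \forall y\in A\}$ if $A\neq\emptyset$ and $\mathscr{N}_A(z)=\mathbb{R}^m$ if $A=\emptyset$. Then $N_\nu(x)=\mathscr{N}_{U^s_\nu(x)}(x^\nu)\subset\mathbb{R}^{n_\nu}$. A point $\hat x\in K(\hat x)$ is a generalized Nash equilibrium if for each $\nu\in I$ there is no $x^\nu\in K_\nu(\hat x^{-\nu})$ with $x^\nu\succ_{\nu,\hat x^{-\nu}}\hat x^\nu$. *)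

theory Defs
  imports "HOL-Analysis.Analysis"
begin

text \<open>Player \<nu> has dimension nd \<nu>; a vector of R^(nd \<nu>) is encoded as a function
 nat => real vanishing at all indices >= nd \<nu>.  A point of R^n = prod R^(n_\<nu>)
 is a function 'i => nat => real whose \<nu>-block lies in R^(nd \<nu>) for \<nu> in I
 and which is zero outside I.  (y^\<nu>, x^(-\<nu>)) is x(\<nu> := y).\<close>

definition blk :: "nat \<Rightarrow> (nat \<Rightarrow> real) set" where
  "blk m = {v. \<forall>k\<ge>m. v k = 0}"

definition prof :: "'i set \<Rightarrow> ('i \<Rightarrow> nat) \<Rightarrow> ('i \<Rightarrow> nat \<Rightarrow> real) set" where
  "prof I nd = {x. (\<forall>\<nu>\<in>I. x \<nu> \<in> blk (nd \<nu>)) \<and> (\<forall>\<nu>. \<nu> \<notin> I \<longrightarrow> x \<nu> = (\<lambda>k. 0))}"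

definition ip :: "nat \<Rightarrow> (nat \<Rightarrow> real) \<Rightarrow> (nat \<Rightarrow> real) \<Rightarrow> real" where
  "ip m u v = (\<Sum>k<m. u k * v k)"

definition bdist :: "nat \<Rightarrow> (nat \<Rightarrow> real) \<Rightarrow> (nat \<Rightarrow> real) \<Rightarrow> real" where
  "bdist m u v = sqrt (\<Sum>k<m. (u k - v k)^2)"

definition pip :: "'i set \<Rightarrow> ('i \<Rightarrow> nat) \<Rightarrow> ('i \<Rightarrow> nat \<Rightarrow> real) \<Rightarrow> ('i \<Rightarrow> nat \<Rightarrow> real) \<Rightarrow> real" where
  "pip I nd a b = (\<Sum>\<nu>\<in>I. ip (nd \<nu>) (a \<nu>) (b \<nu>))"

definition bconvex :: "(nat \<Rightarrow> real) set \<Rightarrow> bool" where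
  "bconvex A = (\<forall>x\<in>A. \<forall>y\<in>A. \<forall>t::real. 0 \<le> t \<and> t \<le> 1 \<longrightarrow> (\<lambda>k. (1 - t) * x k + t * y k) \<in> A)"

definition bcl :: "nat \<Rightarrow> (nat \<Rightarrow> real) set \<Rightarrow> (nat \<Rightarrow> real) set" where
  "bcl m A = {z \<in> blk m. \<forall>e>0. \<exists>y\<in>A. bdist m y z < e}"

definition bclosed :: "nat \<Rightarrow> (nat \<Rightarrow> real) set \<Rightarrow> bool" where
  "bclosed m A = (bcl m A \<subseteq> A)"

definition ncone :: "nat \<Rightarrow> (nat \<Rightarrow> real) set \<Rightarrow> (nat \<Rightarrow> real) \<Rightarrow> (nat \<Rightarrow> real) set" where
  "ncone m A z = (if A = {} then blk m
     else {zs \<in> blk m. \<forall>y\<in>A. ip m zs (\<lambda>k. y k - z k) \<le> 0})"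

definition ind_pref :: "('i \<Rightarrow> ('i \<Rightarrow> nat \<Rightarrow> real) \<Rightarrow> ('i \<Rightarrow> nat \<Rightarrow> real) \<Rightarrow> bool)
    \<Rightarrow> 'i \<Rightarrow> ('i \<Rightarrow> nat \<Rightarrow> real) \<Rightarrow> (nat \<Rightarrow> real) \<Rightarrow> (nat \<Rightarrow> real) \<Rightarrow> bool" where
  "ind_pref P \<nu> w a b = P \<nu> (w(\<nu> := a)) (w(\<nu> := b))"

definition strict_pref :: "('i \<Rightarrow> ('i \<Rightarrow> nat \<Rightarrow> real) \<Rightarrow> ('i \<Rightarrow> nat \<Rightarrow> real) \<Rightarrow> bool)
    \<Rightarrow> 'i \<Rightarrow> ('i \<Rightarrow> nat \<Rightarrow> real) \<Rightarrow> (nat \<Rightarrow> real) \<Rightarrow> (nat \<Rightarrow> real) \<Rightarrow> bool" where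
  "strict_pref P \<nu> w a b = (ind_pref P \<nu> w a b \<and> \<not> ind_pref P \<nu> w b a)"

definition Us :: "('i \<Rightarrow> nat) \<Rightarrow> ('i \<Rightarrow> ('i \<Rightarrow> nat \<Rightarrow> real) \<Rightarrow> ('i \<Rightarrow> nat \<Rightarrow> real) \<Rightarrow> bool)
    \<Rightarrow> 'i \<Rightarrow> ('i \<Rightarrow> nat \<Rightarrow> real) \<Rightarrow> (nat \<Rightarrow> real) set" where
  "Us nd P \<nu> x = {y \<in> blk (nd \<nu>). strict_pref P \<nu> x y (x \<nu>)}"

definition Nnu :: "('i \<Rightarrow> nat) \<Rightarrow> ('i \<Rightarrow> ('i \<Rightarrow> nat \<Rightarrow> real) \<Rightarrow> ('i \<Rightarrow> nat \<Rightarrow> real) \<Rightarrow> bool)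
    \<Rightarrow> 'i \<Rightarrow> ('i \<Rightarrow> nat \<Rightarrow> real) \<Rightarrow> (nat \<Rightarrow> real) set" where
  "Nnu nd P \<nu> x = ncone (nd \<nu>) (Us nd P \<nu> x) (x \<nu>)"

definition N0 :: "'i set \<Rightarrow> ('i \<Rightarrow> nat) \<Rightarrow> ('i \<Rightarrow> ('i \<Rightarrow> nat \<Rightarrow> real) \<Rightarrow> ('i \<Rightarrow> nat \<Rightarrow> real) \<Rightarrow> bool)
    \<Rightarrow> ('i \<Rightarrow> nat \<Rightarrow> real) \<Rightarrow> ('i \<Rightarrow> nat \<Rightarrow> real) set" where
  "N0 I nd P x = {xs \<in> prof I nd. \<forall>\<nu>\<in>I. xs \<nu> \<in> Nnu nd P \<nu> x - {(\<lambda>k. 0)}}"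

text \<open>X_{-\<nu>}: profiles whose components j \<noteq> \<nu> lie in X_j (the \<nu>-component is ignored).\<close>
definition Xminus :: "'i set \<Rightarrow> ('i \<Rightarrow> nat) \<Rightarrow> ('i \<Rightarrow> (nat \<Rightarrow> real) set) \<Rightarrow> 'i \<Rightarrow> ('i \<Rightarrow> nat \<Rightarrow> real) set" where
  "Xminus I nd X \<nu> = {w \<in> prof I nd. \<forall>j\<in>I - {\<nu>}. w j \<in> X j}"

text \<open>K(x) = prod_\<nu> K_\<nu>(x^(-\<nu>)); K \<nu> x depends only on the components j \<noteq> \<nu> of x.\<close>
definition Kprod :: "'i set \<Rightarrow> ('i \<Rightarrow> nat) \<Rightarrow> ('i \<Rightarrow> ('i \<Rightarrow> nat \<Rightarrow> real) \<Rightarrow> (nat \<Rightarrow> real) set)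
    \<Rightarrow> ('i \<Rightarrow> nat \<Rightarrow> real) \<Rightarrow> ('i \<Rightarrow> nat \<Rightarrow> real) set" where
  "Kprod I nd K x = {y \<in> prof I nd. \<forall>\<nu>\<in>I. y \<nu> \<in> K \<nu> x}"

definition is_GNE where
  "is_GNE I nd X P K xh \<longleftrightarrow>
     (\<forall>\<nu>\<in>I. xh \<in> Xminus I nd X \<nu>) \<and> xh \<in> Kprod I nd K xh \<and>
     (\<forall>\<nu>\<in>I. \<not> (\<exists>y\<in>K \<nu> xh. strict_pref P \<nu> xh y (xh \<nu>)))"

end

theory Submission imports Defs begin

lemma ip_Suc: "ip (Suc n) a b = ip n a b + a n * b n"
  by (simp add: ip_def)

lemma ip_cong: "(\<And>k. k < n \<Longrightarrow> a k = a' k) \<Longrightarrow> (\<And>k. k < n \<Longrightarrow> b k = b' k) \<Longrightarrow> ip n a b = ip n a' b'"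
  unfolding ip_def by (rule sum.cong) auto

lemma ip_add: "ip n a (\<lambda>k. x k + y k) = ip n a x + ip n a y"
  unfolding ip_def by (simp add: distrib_left sum.distrib)

lemma ip_diff: "ip n a (\<lambda>k. x k - y k) = ip n a x - ip n a y"
  unfolding ip_def by (simp add: right_diff_distrib sum_subtractf)

lemma ip_scale: "ip n a (\<lambda>k. t * x k) = t * ip n a x"
  unfolding ip_def by (simp add: sum_distrib_left algebra_simps)

lemma ip_div: "ip n a (\<lambda>k. x k / t) = ip n a x / t"
  unfolding ip_def by (simp add: sum_divide_distrib)

lemma ip_zero2: "ip 0 a b = 0" by (simp add: ip_def)

lemma blk_mono: "k \<le> n \<Longrightarrow> x \<in> blk k \<Longrightarrow> x \<in> blk n"
  by (auto simp: blk_def)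

lemma blk0: "x \<in> blk 0 \<Longrightarrow> x = (\<lambda>j. 0)"
  by (auto simp: blk_def)

lemma HB:
  fixes g :: "(nat \<Rightarrow> real) \<Rightarrow> real"
  assumes sub: "\<And>x y. x \<in> blk n \<Longrightarrow> y \<in> blk n \<Longrightarrow> g (\<lambda>j. x j + y j) \<le> g x + g y"
    and hom: "\<And>x t. x \<in> blk n \<Longrightarrow> t > 0 \<Longrightarrow> g (\<lambda>j. t * x j) = t * g x"
  shows "\<exists>L\<in>blk n. \<forall>x\<in>blk n. ip n L x \<le> g x"
proof -
  have z0: "(\<lambda>j. 0::real) \<in> blk n" by (simp add: blk_def)
  have "g (\<lambda>j. 2 * 0) = 2 * g (\<lambda>j. 0)" using hom[OF z0, of 2] by simp
  hence g0: "g (\<lambda>j. 0) = 0" by simp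
  have "k \<le> n \<Longrightarrow> \<exists>L\<in>blk k. \<forall>x\<in>blk k. ip k L x \<le> g x" for k
  proof (induction k)
    case 0
    show ?case
      by (rule bexI[of _ "\<lambda>j. 0"]) (auto simp: ip_def blk_def g0 dest!: blk0)
  next
    case (Suc k)
    then obtain L where L: "L \<in> blk k" "\<forall>x\<in>blk k. ip k L x \<le> g x" by auto
    have kn: "k < n" using Suc.prems by simp
    define e where "e = (\<lambda>j::nat. if j = k then (1::real) else 0)"
    have eb: "e \<in> blk n" using kn by (auto simp: e_def blk_def)
    define S where "S = {ip k L w - g (\<lambda>j. w j - e j) | w. w \<in> blk k}"
    have bnd: "ip k L w - g (\<lambda>j. w j - e j) \<le> g (\<lambda>j. u j + e j) - ip k L u"
      if w: "w \<in> blk k" and u: "u \<in> blk k" for w u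
    proof -
      have wu: "(\<lambda>j. w j + u j) \<in> blk k" using w u by (auto simp: blk_def)
      have w1: "(\<lambda>j. w j - e j) \<in> blk n" and u1: "(\<lambda>j. u j + e j) \<in> blk n"
        using w u eb kn by (auto simp: blk_def)
      have "ip k L w + ip k L u = ip k L (\<lambda>j. w j + u j)" by (simp add: ip_add)
      also have "\<dots> \<le> g (\<lambda>j. w j + u j)" using L wu by auto
      also have "(\<lambda>j. w j + u j) = (\<lambda>j. (w j - e j) + (u j + e j))" by simp
      also have "g \<dots> \<le> g (\<lambda>j. w j - e j) + g (\<lambda>j. u j + e j)" using sub[OF w1 u1] by simp
      finally show ?thesis by simp
    qed
    define c where "c = Sup S"
    have z0k: "(\<lambda>j. 0::real) \<in> blk k" by (simp add: blk_def)
    have Sne: "S \<noteq> {}" using z0k by (auto simp: S_def)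
    have Sbdd: "bdd_above S" unfolding bdd_above_def S_def using bnd[OF _ z0k] by blast
    have cup: "ip k L w - g (\<lambda>j. w j - e j) \<le> c" if "w \<in> blk k" for w
      unfolding c_def using that Sbdd by (intro cSup_upper) (auto simp: S_def)
    have clow: "c \<le> g (\<lambda>j. u j + e j) - ip k L u" if "u \<in> blk k" for u
      unfolding c_def using that Sne bnd by (intro cSup_least) (auto simp: S_def)
    define L' where "L' = L(k := c)"
    have L'b: "L' \<in> blk (Suc k)" using L(1) by (auto simp: L'_def blk_def)
    have "\<forall>x\<in>blk (Suc k). ip (Suc k) L' x \<le> g x"
    proof
      fix x assume x: "x \<in> blk (Suc k)"
      define v where "v = x(k := 0)"
      define t where "t = x k"
      have v: "v \<in> blk k" using x by (auto simp: v_def blk_def)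
      have "ip (Suc k) L' x = ip k L' x + c * t" by (simp add: ip_Suc L'_def t_def)
      also have "ip k L' x = ip k L v" by (rule ip_cong) (auto simp: L'_def v_def)
      finally have eq: "ip (Suc k) L' x = ip k L v + c * t" .
      consider "t = 0" | "t > 0" | "t < 0" by linarith
      then show "ip (Suc k) L' x \<le> g x"
      proof cases
        case 1
        hence "x = v" by (auto simp: v_def t_def)
        then show ?thesis using eq 1 L v by simp
      next
        case 2
        define w where "w = (\<lambda>j. v j / t)"
        have w: "w \<in> blk k" using v by (auto simp: w_def blk_def)
        have we: "(\<lambda>j. w j + e j) \<in> blk n" using w eb kn by (auto simp: blk_def)
        have "t * c \<le> t * (g (\<lambda>j. w j + e j) - ip k L w)"
          using clow[OF w] 2 by (simp add: mult_left_mono)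
        also have "\<dots> = g (\<lambda>j. t * (w j + e j)) - ip k L v"
          using hom[OF we 2] 2 by (simp add: w_def ip_div algebra_simps)
        also have "(\<lambda>j. t * (w j + e j)) = x"
          using 2 by (auto simp: w_def e_def v_def t_def)
        finally show ?thesis using eq by (simp add: algebra_simps)
      next
        case 3
        define s where "s = - t"
        have s: "s > 0" using 3 by (simp add: s_def)
        define w where "w = (\<lambda>j. v j / s)"
        have w: "w \<in> blk k" using v by (auto simp: w_def blk_def)
        have we: "(\<lambda>j. w j - e j) \<in> blk n" using w eb kn by (auto simp: blk_def)
        have "s * (ip k L w - g (\<lambda>j. w j - e j)) \<le> s * c"
          using cup[OF w] s by (simp add: mult_left_mono)
        also have "s * (ip k L w - g (\<lambda>j. w j - e j)) = ip k L v - g (\<lambda>j. s * (w j - e j))"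
          using hom[OF we s] s by (simp add: w_def ip_div algebra_simps)
        also have "(\<lambda>j. s * (w j - e j)) = x"
          using s by (auto simp: w_def e_def v_def t_def s_def)
        finally show ?thesis using eq by (simp add: s_def algebra_simps)
      qed
    qed
    then show ?case using L'b by blast
  qed
  then show ?thesis by simp
qed


lemma core:
  assumes Ksub: "K \<subseteq> blk (Suc n)"
    and add: "\<And>x y. x\<in>K \<Longrightarrow> y\<in>K \<Longrightarrow> (\<lambda>j. x j + y j) \<in> K"
    and scl: "\<And>x t. x\<in>K \<Longrightarrow> t \<ge> 0 \<Longrightarrow> (\<lambda>j. t * x j) \<in> K"
    and surj: "\<And>x. x \<in> blk n \<Longrightarrow> \<exists>c\<in>K. c(n := 0) = x"
    and sg: "\<sigma> = 1 \<or> \<sigma> = (-1::real)"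
    and ndK: "(\<lambda>j. if j = n then -\<sigma> else 0) \<notin> K"
  shows "\<exists>z\<in>blk (Suc n). z \<noteq> (\<lambda>j. 0) \<and> (\<forall>c\<in>K. 0 \<le> ip (Suc n) z c)"
proof -
  define d where "d = (\<lambda>j. if j = n then \<sigma> else (0::real))"
  define G where "G x = {t. (\<lambda>j. x j + t * d j) \<in> K}" for x
  define g where "g x = Inf (G x)" for x
  have ss: "\<sigma> * \<sigma> = 1" using sg by auto
  have Gc: "\<sigma> * c n \<in> G (c(n := 0))" if "c \<in> K" for c
  proof -
    have "(\<lambda>j. (c(n := 0)) j + (\<sigma> * c n) * d j) = c"
      using ss by (auto simp: d_def)
    then show ?thesis using that by (simp add: G_def)
  qed
  have Gne: "G x \<noteq> {}" if "x \<in> blk n" for x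
    using surj[OF that] Gc by blast
  have G0: "t \<ge> 0" if "t \<in> G (\<lambda>j. 0)" for t
  proof (rule ccontr)
    assume t: "\<not> t \<ge> 0"
    have "(\<lambda>j. 0 + t * d j) \<in> K" using that by (simp add: G_def)
    hence "(\<lambda>j. (-1/t) * (0 + t * d j)) \<in> K" using t by (intro scl) auto
    also have "(\<lambda>j. (-1/t) * (0 + t * d j)) = (\<lambda>j. if j = n then -\<sigma> else 0)"
      using t by (auto simp: d_def)
    finally show False using ndK by simp
  qed
  have Gadd: "a + b \<in> G (\<lambda>j. x j + y j)" if "a \<in> G x" "b \<in> G y" for a b x y
  proof -
    have "(\<lambda>j. x j + a * d j) \<in> K" "(\<lambda>j. y j + b * d j) \<in> K"
      using that by (auto simp: G_def)
    from add[OF this] have "(\<lambda>j. (\<lambda>j. x j + a * d j) j + (\<lambda>j. y j + b * d j) j) \<in> K" by simp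
    moreover have "(\<lambda>j. (\<lambda>j. x j + a * d j) j + (\<lambda>j. y j + b * d j) j)
       = (\<lambda>j. (x j + y j) + (a + b) * d j)" by (auto simp: algebra_simps)
    ultimately show ?thesis by (simp add: G_def)
  qed
  have Gscale: "t * a \<in> G (\<lambda>j. t * x j)" if "a \<in> G x" "t \<ge> 0" for a t x
  proof -
    have "(\<lambda>j. x j + a * d j) \<in> K" using that by (auto simp: G_def)
    from scl[OF this that(2)] have "(\<lambda>j. t * (\<lambda>j. x j + a * d j) j) \<in> K" by simp
    moreover have "(\<lambda>j. t * (\<lambda>j. x j + a * d j) j) = (\<lambda>j. t * x j + (t * a) * d j)"
      by (auto simp: algebra_simps)
    ultimately show ?thesis by (simp add: G_def)
  qed
  have Gbdd: "bdd_below (G x)" if "x \<in> blk n" for x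
  proof -
    have "(\<lambda>j. - x j) \<in> blk n" using that by (auto simp: blk_def)
    then obtain u where u: "u \<in> G (\<lambda>j. - x j)" using Gne by blast
    have "- u \<le> a" if "a \<in> G x" for a
    proof -
      have "a + u \<in> G (\<lambda>j. x j + - x j)" using Gadd[OF that u] .
      hence "a + u \<in> G (\<lambda>j. 0)" by simp
      thus ?thesis using G0 by fastforce
    qed
    thus ?thesis unfolding bdd_below_def by blast
  qed
  have glow: "g x \<le> a" if "x \<in> blk n" "a \<in> G x" for x a
    unfolding g_def using that Gbdd by (intro cInf_lower) auto
  have gge: "b \<le> g x" if "x \<in> blk n" "\<And>a. a \<in> G x \<Longrightarrow> b \<le> a" for x b
    unfolding g_def using that Gne by (intro cInf_greatest) auto
  have sub: "g (\<lambda>j. x j + y j) \<le> g x + g y" if x: "x \<in> blk n" and y: "y \<in> blk n" for x y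
  proof -
    have xy: "(\<lambda>j. x j + y j) \<in> blk n" using x y by (auto simp: blk_def)
    have "g (\<lambda>j. x j + y j) - g y \<le> a" if a: "a \<in> G x" for a
    proof -
      have "g (\<lambda>j. x j + y j) - a \<le> g y"
      proof (rule gge[OF y])
        fix b assume "b \<in> G y"
        from glow[OF xy Gadd[OF a this]] show "g (\<lambda>j. x j + y j) - a \<le> b" by simp
      qed
      thus ?thesis by simp
    qed
    hence "g (\<lambda>j. x j + y j) - g y \<le> g x" using gge[OF x] by blast
    thus ?thesis by simp
  qed
  have hom: "g (\<lambda>j. t * x j) = t * g x" if x: "x \<in> blk n" and t: "t > 0" for x t
  proof -
    have tx: "(\<lambda>j. t * x j) \<in> blk n" using x by (auto simp: blk_def)
    have "g (\<lambda>j. t * x j) / t \<le> a" if a: "a \<in> G x" for a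
      using glow[OF tx Gscale[OF a]] t by (simp add: divide_le_eq mult.commute)
    hence 1: "g (\<lambda>j. t * x j) / t \<le> g x" using gge[OF x] by blast
    have "g x \<le> b / t" if b: "b \<in> G (\<lambda>j. t * x j)" for b
    proof -
      have "(1/t) * b \<in> G (\<lambda>j. (1/t) * (t * x j))" using Gscale[OF b, of "1/t"] t by simp
      moreover have "(\<lambda>j. (1/t) * (t * x j)) = x" using t by auto
      ultimately have "b / t \<in> G x" by simp
      thus ?thesis using glow[OF x] by simp
    qed
    hence "t * g x \<le> b" if "b \<in> G (\<lambda>j. t * x j)" for b
      using that t by (simp add: le_divide_eq mult.commute)
    hence 2: "t * g x \<le> g (\<lambda>j. t * x j)" using gge[OF tx] by blast
    show ?thesis using 1 2 t by (simp add: divide_le_eq mult.commute)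
  qed
  obtain L where L: "L \<in> blk n" "\<forall>x\<in>blk n. ip n L x \<le> g x"
    using HB[of n g] sub hom by blast
  define z where "z = (\<lambda>j. if j = n then \<sigma> else - L j)"
  have zb: "z \<in> blk (Suc n)" using L(1) by (auto simp: z_def blk_def)
  have zn: "z \<noteq> (\<lambda>j. 0)"
  proof
    assume "z = (\<lambda>j. 0)"
    hence "z n = 0" by simp
    thus False using sg by (auto simp: z_def)
  qed
  have "0 \<le> ip (Suc n) z c" if c: "c \<in> K" for c
  proof -
    have cb: "c \<in> blk (Suc n)" using c Ksub by auto
    have xb: "c(n := 0) \<in> blk n" using cb by (auto simp: blk_def)
    have "ip (Suc n) z c = ip n z c + \<sigma> * c n" by (simp add: ip_Suc z_def)
    also have "ip n z c = - ip n L (c(n := 0))"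
    proof -
      have "ip n z c = ip n (\<lambda>j. - L j) (c(n := 0))" by (rule ip_cong) (auto simp: z_def)
      thus ?thesis by (simp add: ip_def sum_negf)
    qed
    finally have "ip (Suc n) z c = \<sigma> * c n - ip n L (c(n := 0))" by simp
    moreover have "g (c(n := 0)) \<le> \<sigma> * c n" using glow[OF xb Gc[OF c]] .
    moreover have "ip n L (c(n := 0)) \<le> g (c(n := 0))" using L(2) xb by blast
    ultimately show ?thesis by simp
  qed
  thus ?thesis using zb zn by blast
qed


lemma cone_sep:
  "K \<subseteq> blk n \<Longrightarrow> K \<noteq> {} \<Longrightarrow> (\<forall>x\<in>K. \<forall>y\<in>K. (\<lambda>j. x j + y j) \<in> K) \<Longrightarrow>
   (\<forall>x\<in>K. \<forall>t\<ge>0. (\<lambda>j. t * x j) \<in> K) \<Longrightarrow> w \<in> blk n \<Longrightarrow> w \<notin> K \<Longrightarrow>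
   \<exists>z\<in>blk n. z \<noteq> (\<lambda>j. 0) \<and> (\<forall>c\<in>K. 0 \<le> ip n z c)"
proof (induction n arbitrary: K w)
  case 0
  then obtain c where "c \<in> K" by auto
  hence "(\<lambda>j. 0 * c j) \<in> K" using 0 by blast
  moreover have "w = (\<lambda>j. 0)" using 0 blk0 by blast
  ultimately show ?case using 0 by simp
next
  case (Suc n)
  note Ksub = Suc.prems(1) and add = Suc.prems(3) and scl = Suc.prems(4)
  obtain c0 where c0: "c0 \<in> K" using Suc.prems(2) by auto
  have zK: "(\<lambda>j. 0) \<in> K" using scl c0 by force
  define PK where "PK = (\<lambda>c. c(n := 0)) ` K"
  show ?case
  proof (cases "\<exists>w'\<in>blk n. w' \<notin> PK")
    case True
    then obtain w' where w': "w' \<in> blk n" "w' \<notin> PK" by auto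
    have PKsub: "PK \<subseteq> blk n" using Ksub by (auto simp: PK_def blk_def)
    have PKne: "PK \<noteq> {}" using c0 by (auto simp: PK_def)
    have PKadd: "\<forall>x\<in>PK. \<forall>y\<in>PK. (\<lambda>j. x j + y j) \<in> PK"
    proof (intro ballI)
      fix x y assume "x \<in> PK" "y \<in> PK"
      then obtain a b where ab: "a \<in> K" "b \<in> K" "x = a(n := 0)" "y = b(n := 0)" by (auto simp: PK_def)
      have "(\<lambda>j. a j + b j) \<in> K" using add ab by blast
      moreover have "(\<lambda>j. x j + y j) = (\<lambda>j. a j + b j)(n := 0)" using ab by auto
      ultimately show "(\<lambda>j. x j + y j) \<in> PK" unfolding PK_def by blast
    qed
    have PKscl: "\<forall>x\<in>PK. \<forall>t\<ge>0. (\<lambda>j. t * x j) \<in> PK"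
    proof (intro ballI allI impI)
      fix x t assume "x \<in> PK" "(t::real) \<ge> 0"
      then obtain a where a: "a \<in> K" "x = a(n := 0)" by (auto simp: PK_def)
      have "(\<lambda>j. t * a j) \<in> K" using scl a \<open>t \<ge> 0\<close> by blast
      moreover have "(\<lambda>j. t * x j) = (\<lambda>j. t * a j)(n := 0)" using a by auto
      ultimately show "(\<lambda>j. t * x j) \<in> PK" unfolding PK_def by blast
    qed
    obtain z where z: "z \<in> blk n" "z \<noteq> (\<lambda>j. 0)" "\<forall>c\<in>PK. 0 \<le> ip n z c"
      using Suc.IH[OF PKsub PKne PKadd PKscl w'] by blast
    have "0 \<le> ip (Suc n) z c" if "c \<in> K" for c
    proof -
      have "z n = 0" using z(1) by (auto simp: blk_def)
      hence "ip (Suc n) z c = ip n z c" by (simp add: ip_Suc)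
      also have "\<dots> = ip n z (c(n := 0))" by (rule ip_cong) auto
      finally show ?thesis using z(3) that by (auto simp: PK_def)
    qed
    then show ?thesis using z(1,2) blk_mono[of n "Suc n"] by auto
  next
    case False
    hence surj: "\<And>x. x \<in> blk n \<Longrightarrow> \<exists>c\<in>K. c(n := 0) = x" by (auto simp: PK_def)
    define ev where "ev s = (\<lambda>j. if j = n then s else (0::real))" for s
    have evK: "ev 1 \<notin> K \<or> ev (-1) \<notin> K"
    proof (rule ccontr)
      assume "\<not> ?thesis"
      hence e1: "ev 1 \<in> K" and e2: "ev (-1) \<in> K" by auto
      have wb: "w(n := 0) \<in> blk n" using Suc.prems(5) by (auto simp: blk_def)
      obtain c where c: "c \<in> K" "c(n := 0) = w(n := 0)" using surj[OF wb] by blast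
      define a where "a = w n - c n"
      have "w \<in> K"
      proof (cases "a \<ge> 0")
        case True
        have "(\<lambda>j. a * ev 1 j) \<in> K" using scl e1 True by blast
        from add[rule_format, OF c(1) this] have "(\<lambda>j. c j + (\<lambda>j. a * ev 1 j) j) \<in> K" by simp
        moreover have "(\<lambda>j. c j + (\<lambda>j. a * ev 1 j) j) = w"
        proof
          fix j show "c j + a * ev 1 j = w j"
            using fun_cong[OF c(2), of j] by (cases "j = n") (auto simp: ev_def a_def)
        qed
        ultimately show ?thesis by simp
      next
        case False
        have "(\<lambda>j. (-a) * ev (-1) j) \<in> K" using scl[rule_format, OF e2, of "-a"] False by simp
        from add[rule_format, OF c(1) this] have "(\<lambda>j. c j + (\<lambda>j. (-a) * ev (-1) j) j) \<in> K" by simp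
        moreover have "(\<lambda>j. c j + (\<lambda>j. (-a) * ev (-1) j) j) = w"
        proof
          fix j show "c j + (-a) * ev (-1) j = w j"
            using fun_cong[OF c(2), of j] by (cases "j = n") (auto simp: ev_def a_def)
        qed
        ultimately show ?thesis by simp
      qed
      thus False using Suc.prems(6) by simp
    qed
    obtain \<sigma> :: real where sg: "\<sigma> = 1 \<or> \<sigma> = -1" and nK: "ev (-\<sigma>) \<notin> K"
      using evK by (metis minus_minus)
    define K' where "K' = {(\<lambda>j. c j + t * ev \<sigma> j) | c t. c \<in> K \<and> t \<ge> 0}"
    have evb: "ev s \<in> blk (Suc n)" for s by (auto simp: ev_def blk_def)
    have K'sub: "K' \<subseteq> blk (Suc n)" using Ksub evb by (auto simp: K'_def blk_def)
    have K'add: "(\<lambda>j. x j + y j) \<in> K'" if xK: "x \<in> K'" and yK: "y \<in> K'" for x y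
    proof -
      obtain a s where ab1: "a \<in> K" "s \<ge> 0" "x = (\<lambda>j. a j + s * ev \<sigma> j)"
        using xK unfolding K'_def by blast
      obtain b t where ab2: "b \<in> K" "t \<ge> 0" "y = (\<lambda>j. b j + t * ev \<sigma> j)"
        using yK unfolding K'_def by blast
      note ab = ab1 ab2
      have "(\<lambda>j. a j + b j) \<in> K" using add[rule_format, OF ab(1) ab(4)] by simp
      moreover have "(\<lambda>j. x j + y j) = (\<lambda>j. (\<lambda>j. a j + b j) j + (s + t) * ev \<sigma> j)"
        using ab by (auto simp: algebra_simps)
      ultimately show ?thesis using ab unfolding K'_def by fastforce
    qed
    have K'scl: "(\<lambda>j. r * x j) \<in> K'" if xK: "x \<in> K'" and r0: "r \<ge> 0" for x r
    proof -
      obtain a s where ab: "a \<in> K" "s \<ge> 0" "x = (\<lambda>j. a j + s * ev \<sigma> j)"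
        using xK unfolding K'_def by blast
      have "(\<lambda>j. r * a j) \<in> K" using scl ab r0 by blast
      moreover have "(\<lambda>j. r * x j) = (\<lambda>j. (\<lambda>j. r * a j) j + (r * s) * ev \<sigma> j)"
        using ab by (auto simp: algebra_simps)
      ultimately show ?thesis using ab r0 unfolding K'_def by fastforce
    qed
    have KK': "K \<subseteq> K'"
    proof
      fix c assume "c \<in> K"
      moreover have "c = (\<lambda>j. c j + 0 * ev \<sigma> j)" by simp
      ultimately show "c \<in> K'" unfolding K'_def by blast
    qed
    have K'surj: "\<exists>c\<in>K'. c(n := 0) = x" if "x \<in> blk n" for x
      using surj[OF that] KK' by blast
    have nK': "(\<lambda>j. if j = n then -\<sigma> else 0) \<notin> K'"
    proof
      assume "(\<lambda>j. if j = n then -\<sigma> else 0) \<in> K'"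
      then obtain a t where a: "a \<in> K" "t \<ge> 0"
        "(\<lambda>j. if j = n then -\<sigma> else 0) = (\<lambda>j. a j + t * ev \<sigma> j)" by (auto simp: K'_def)
      have "(\<lambda>j. (1 / (1 + t)) * a j) \<in> K" using scl[rule_format, OF a(1), of "1 / (1 + t)"] a(2) by simp
      moreover have "(\<lambda>j. (1 / (1 + t)) * a j) = ev (-\<sigma>)"
      proof
        fix j
        have "(if j = n then -\<sigma> else 0) = a j + t * ev \<sigma> j" using fun_cong[OF a(3), of j] by simp
        show "(1 / (1 + t)) * a j = ev (-\<sigma>) j"
        proof (cases "j = n")
          case True
          have h: "-\<sigma> = a j + t * \<sigma>" using \<open>(if j = n then -\<sigma> else 0) = a j + t * ev \<sigma> j\<close> True
            by (simp add: ev_def)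
          hence "a j = - \<sigma> * (1 + t)" by algebra
          thus ?thesis using a(2) True by (simp add: ev_def)
        next
          case False
          thus ?thesis using \<open>(if j = n then -\<sigma> else 0) = a j + t * ev \<sigma> j\<close> by (simp add: ev_def)
        qed
      qed
      ultimately show False using nK by simp
    qed
    obtain z where z: "z \<in> blk (Suc n)" "z \<noteq> (\<lambda>j. 0)" "\<forall>c\<in>K'. 0 \<le> ip (Suc n) z c"
      using core[OF K'sub K'add K'scl K'surj sg nK'] by blast
    then show ?thesis using KK' by blast
  qed
qed


lemma convex_sep:
  assumes Csub: "C \<subseteq> blk n" and Cne: "C \<noteq> {}" and Cc: "bconvex C" and C0: "(\<lambda>j. 0) \<notin> C"
  shows "\<exists>z\<in>blk n. z \<noteq> (\<lambda>j. 0) \<and> (\<forall>c\<in>C. 0 \<le> ip n z c)"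
proof -
  define Kc where "Kc = {(\<lambda>j. t * c j) | t c. t \<ge> 0 \<and> c \<in> C}"
  obtain c0 where c0: "c0 \<in> C" using Cne by auto
  have cvx: "(\<lambda>k. (1 - r) * x k + r * y k) \<in> C" if "x \<in> C" "y \<in> C" "0 \<le> r" "r \<le> 1" for x y r
    using Cc that unfolding bconvex_def by blast
  have Ksub: "Kc \<subseteq> blk n" using Csub by (auto simp: Kc_def blk_def)
  have CK: "c \<in> Kc" if "c \<in> C" for c
  proof -
    show ?thesis unfolding Kc_def using that by (intro CollectI exI[of _ "1::real"] exI[of _ c]) auto
  qed
  have Kne: "Kc \<noteq> {}" using CK c0 by blast
  have Kadd: "\<forall>x\<in>Kc. \<forall>y\<in>Kc. (\<lambda>j. x j + y j) \<in> Kc"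
  proof (intro ballI)
    fix x y assume xK: "x \<in> Kc" and yK: "y \<in> Kc"
    obtain t a where ta: "t \<ge> 0" "a \<in> C" "x = (\<lambda>j. t * a j)" using xK unfolding Kc_def by blast
    obtain s b where sb: "s \<ge> 0" "b \<in> C" "y = (\<lambda>j. s * b j)" using yK unfolding Kc_def by blast
    show "(\<lambda>j. x j + y j) \<in> Kc"
    proof (cases "t + s = 0")
      case True
      hence "t = 0" "s = 0" using ta sb by auto
      hence "(\<lambda>j. x j + y j) = (\<lambda>j. 0 * a j)" using ta sb by auto
      thus ?thesis using ta unfolding Kc_def by blast
    next
      case False
      hence ts: "t + s > 0" using ta sb by auto
      define r where "r = s / (t + s)"
      have r: "0 \<le> r" "r \<le> 1" using ts ta sb by (auto simp: r_def)
      have p: "(\<lambda>k. (1 - r) * a k + r * b k) \<in> C" using cvx[OF ta(2) sb(2) r] .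
      have "(\<lambda>j. x j + y j) = (\<lambda>j. (t + s) * (\<lambda>k. (1 - r) * a k + r * b k) j)"
      proof
        fix j
        have h1: "(t + s) * (1 - r) = t" and h2: "(t + s) * r = s" using ts by (simp_all add: r_def field_simps)
        have "(t + s) * ((1 - r) * a j + r * b j) = ((t + s) * (1 - r)) * a j + ((t + s) * r) * b j"
          by (simp add: algebra_simps)
        thus "x j + y j = (t + s) * (\<lambda>k. (1 - r) * a k + r * b k) j"
          using ta sb h1 h2 by simp
      qed
      thus ?thesis using p ts unfolding Kc_def by fastforce
    qed
  qed
  have Kscl: "\<forall>x\<in>Kc. \<forall>t\<ge>0. (\<lambda>j. t * x j) \<in> Kc"
  proof (intro ballI allI impI)
    fix x and r :: real assume xK: "x \<in> Kc" and r: "r \<ge> 0"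
    obtain t a where ta: "t \<ge> 0" "a \<in> C" "x = (\<lambda>j. t * a j)" using xK unfolding Kc_def by blast
    have "(\<lambda>j. r * x j) = (\<lambda>j. (r * t) * a j)" using ta by auto
    thus "(\<lambda>j. r * x j) \<in> Kc" using ta r unfolding Kc_def by fastforce
  qed
  have wb: "(\<lambda>j. - c0 j) \<in> blk n" using c0 Csub by (auto simp: blk_def)
  have wK: "(\<lambda>j. - c0 j) \<notin> Kc"
  proof
    assume "(\<lambda>j. - c0 j) \<in> Kc"
    then obtain t a where ta: "t \<ge> 0" "a \<in> C" "(\<lambda>j. - c0 j) = (\<lambda>j. t * a j)" unfolding Kc_def by blast
    define r where "r = t / (1 + t)"
    have r: "0 \<le> r" "r \<le> 1" using ta by (auto simp: r_def)
    have "(\<lambda>k. (1 - r) * c0 k + r * a k) \<in> C" using cvx[OF c0 ta(2) r] .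
    moreover have "(\<lambda>k. (1 - r) * c0 k + r * a k) = (\<lambda>j. 0)"
    proof
      fix k
      have "- c0 k = t * a k" using fun_cong[OF ta(3), of k] by simp
      hence "c0 k + t * a k = 0" by simp
      moreover have nz: "1 + t \<noteq> 0" using ta by simp
      have h1: "(1 + t) * (1 - r) = 1" and h2: "(1 + t) * r = t" using nz by (simp_all add: r_def field_simps)
      have "(1 + t) * ((1 - r) * c0 k + r * a k) = ((1 + t) * (1 - r)) * c0 k + ((1 + t) * r) * a k"
        by (simp add: algebra_simps)
      ultimately show "(1 - r) * c0 k + r * a k = 0" using h1 h2 nz by simp
    qed
    ultimately show False using C0 by simp
  qed
  obtain z where z: "z \<in> blk n" "z \<noteq> (\<lambda>j. 0)" "\<forall>c\<in>Kc. 0 \<le> ip n z c"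
    using cone_sep[OF Ksub Kne Kadd Kscl wb wK] by blast
  thus ?thesis using CK by blast
qed

lemma ip_dist:
  assumes "u \<in> blk m" "x \<in> blk m"
  shows "\<bar>ip m z u - ip m z x\<bar> \<le> (\<Sum>j<m. \<bar>z j\<bar>) * bdist m u x"
proof -
  have comp: "\<bar>u j - x j\<bar> \<le> bdist m u x" if "j < m" for j
  proof -
    have "(u j - x j)^2 \<le> (\<Sum>k<m. (u k - x k)^2)"
      using that by (intro member_le_sum) auto
    hence "sqrt ((u j - x j)^2) \<le> bdist m u x" unfolding bdist_def by (rule real_sqrt_le_mono)
    thus ?thesis by simp
  qed
  have "ip m z u - ip m z x = (\<Sum>j<m. z j * (u j - x j))"
    by (simp add: ip_def sum_subtractf right_diff_distrib)
  hence "\<bar>ip m z u - ip m z x\<bar> \<le> (\<Sum>j<m. \<bar>z j * (u j - x j)\<bar>)"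
    by (simp add: sum_abs)
  also have "\<dots> \<le> (\<Sum>j<m. \<bar>z j\<bar> * bdist m u x)"
    by (intro sum_mono) (auto simp: abs_mult intro: mult_left_mono comp)
  finally show ?thesis by (simp add: sum_distrib_right)
qed


lemma player:
  assumes Ub: "U \<subseteq> blk m" and Uc: "bconvex U" and Ucl: "xv \<in> bcl m U"
    and Kb: "Kv \<subseteq> blk m" and Kc: "bconvex Kv" and xK: "xv \<in> Kv" and disj: "U \<inter> Kv = {}"
  shows "\<exists>z\<in>blk m. z \<noteq> (\<lambda>j. 0) \<and> (\<forall>y\<in>U. ip m z (\<lambda>k. y k - xv k) \<le> 0)
           \<and> (\<forall>y\<in>Kv. 0 \<le> ip m z (\<lambda>k. y k - xv k))"
proof -
  have Une: "U \<noteq> {}" using Ucl by (auto simp: bcl_def dest: spec[of _ 1])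
  define D where "D = {(\<lambda>j. k j - u j) | k u. k \<in> Kv \<and> u \<in> U}"
  have Db: "D \<subseteq> blk m" using Ub Kb unfolding D_def blk_def by fastforce
  have Dne: "D \<noteq> {}" using Une xK by (auto simp: D_def)
  have Dc: "bconvex D" unfolding bconvex_def
  proof (intro ballI allI impI)
    fix x y and t :: real assume xD: "x \<in> D" and yD: "y \<in> D" and t: "0 \<le> t \<and> t \<le> 1"
    obtain k u where ku: "k \<in> Kv" "u \<in> U" "x = (\<lambda>j. k j - u j)" using xD unfolding D_def by blast
    obtain k' u' where ku': "k' \<in> Kv" "u' \<in> U" "y = (\<lambda>j. k' j - u' j)" using yD unfolding D_def by blast
    have k2: "(\<lambda>j. (1 - t) * k j + t * k' j) \<in> Kv" using Kc ku ku' t unfolding bconvex_def by blast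
    have u2: "(\<lambda>j. (1 - t) * u j + t * u' j) \<in> U" using Uc ku ku' t unfolding bconvex_def by blast
    have "(\<lambda>ja. (1 - t) * x ja + t * y ja) =
      (\<lambda>j. (\<lambda>j. (1 - t) * k j + t * k' j) j - (\<lambda>j. (1 - t) * u j + t * u' j) j)"
      using ku ku' by (auto simp: algebra_simps)
    thus "(\<lambda>ja. (1 - t) * x ja + t * y ja) \<in> D" using k2 u2 unfolding D_def
      by (intro CollectI exI[of _ "\<lambda>j. (1 - t) * k j + t * k' j"] exI[of _ "\<lambda>j. (1 - t) * u j + t * u' j"]) simp
  qed
  have D0: "(\<lambda>j. 0) \<notin> D"
  proof
    assume "(\<lambda>j. 0) \<in> D"
    then obtain k u where ku: "k \<in> Kv" "u \<in> U" "(\<lambda>j. 0::real) = (\<lambda>j. k j - u j)" unfolding D_def by blast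
    have "k = u"
    proof
      fix j show "k j = u j" using fun_cong[OF ku(3), of j] by simp
    qed
    thus False using ku disj by blast
  qed
  obtain z where z: "z \<in> blk m" "z \<noteq> (\<lambda>j. 0)" "\<forall>c\<in>D. 0 \<le> ip m z c"
    using convex_sep[OF Db Dne Dc D0] by blast
  have ku: "ip m z u \<le> ip m z k" if "k \<in> Kv" "u \<in> U" for k u
  proof -
    have "(\<lambda>j. k j - u j) \<in> D" using that unfolding D_def by blast
    hence "0 \<le> ip m z (\<lambda>j. k j - u j)" using z(3) by blast
    thus ?thesis by (simp add: ip_diff)
  qed
  have A: "\<forall>y\<in>U. ip m z (\<lambda>k. y k - xv k) \<le> 0" using ku[OF xK] by (simp add: ip_diff)
  have B: "ip m z xv \<le> ip m z k" if k: "k \<in> Kv" for k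
  proof (rule ccontr)
    assume nt: "\<not> ip m z xv \<le> ip m z k"
    define \<delta> where "\<delta> = ip m z xv - ip m z k"
    have d: "\<delta> > 0" using nt by (simp add: \<delta>_def)
    define M where "M = (\<Sum>j<m. \<bar>z j\<bar>) + 1"
    have M: "M > 0" by (simp add: M_def sum_nonneg add_nonneg_pos)
    obtain u where u: "u \<in> U" "bdist m u xv < \<delta> / M"
      using Ucl d M unfolding bcl_def by (auto dest!: spec[of _ "\<delta> / M"])
    have xb: "xv \<in> blk m" using Ucl by (simp add: bcl_def)
    have ub: "u \<in> blk m" using u Ub by auto
    have bd0: "bdist m u xv \<ge> 0" by (simp add: bdist_def sum_nonneg)
    have "\<bar>ip m z u - ip m z xv\<bar> \<le> (\<Sum>j<m. \<bar>z j\<bar>) * bdist m u xv" using ip_dist[OF ub xb] .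
    also have "\<dots> \<le> M * bdist m u xv" using bd0 by (intro mult_right_mono) (auto simp: M_def)
    also have "\<dots> < M * (\<delta> / M)" using u(2) M by (intro mult_strict_left_mono) auto
    also have "\<dots> = \<delta>" using M by simp
    finally have "ip m z k < ip m z u" by (simp add: \<delta>_def)
    thus False using ku[OF k u(1)] by simp
  qed
  have "\<forall>y\<in>Kv. 0 \<le> ip m z (\<lambda>k. y k - xv k)" using B by (simp add: ip_diff)
  thus ?thesis using z A by blast
qed


theorem theorem2:
  fixes I :: "'i set" and nd :: "'i \<Rightarrow> nat"
    and X :: "'i \<Rightarrow> (nat \<Rightarrow> real) set"
    and P :: "'i \<Rightarrow> ('i \<Rightarrow> nat \<Rightarrow> real) \<Rightarrow> ('i \<Rightarrow> nat \<Rightarrow> real) \<Rightarrow> bool"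
    and K :: "'i \<Rightarrow> ('i \<Rightarrow> nat \<Rightarrow> real) \<Rightarrow> (nat \<Rightarrow> real) set"
    and xh :: "'i \<Rightarrow> nat \<Rightarrow> real"
  assumes finI: "finite I"
    and X_sub: "\<forall>\<nu>\<in>I. X \<nu> \<subseteq> blk (nd \<nu>)"
    and K_dep: "\<forall>\<nu>\<in>I. \<forall>x v. K \<nu> (x(\<nu> := v)) = K \<nu> x"
    and K_maps: "\<forall>\<nu>\<in>I. \<forall>w\<in>Xminus I nd X \<nu>. K \<nu> w \<subseteq> X \<nu>"
    and K_vals: "\<forall>\<nu>\<in>I. \<forall>w\<in>Xminus I nd X \<nu>.
                   K \<nu> w \<noteq> {} \<and> bclosed (nd \<nu>) (K \<nu> w) \<and> bconvex (K \<nu> w)"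
    and U_conv: "\<forall>\<nu>\<in>I. \<forall>x\<in>prof I nd. bconvex (Us nd P \<nu> x)"
    and U_cl: "\<forall>\<nu>\<in>I. \<forall>x\<in>prof I nd. x \<nu> \<in> bcl (nd \<nu>) (Us nd P \<nu> x)"
    and gne: "is_GNE I nd X P K xh"
  shows "xh \<in> Kprod I nd K xh \<and>
         (\<exists>xs\<in>N0 I nd P xh. \<forall>y\<in>Kprod I nd K xh.
              pip I nd xs (\<lambda>\<nu> k. y \<nu> k - xh \<nu> k) \<ge> 0)"
proof -
  have xK: "xh \<in> Kprod I nd K xh" using gne by (simp add: is_GNE_def)
  have per: "\<exists>z. z \<in> Nnu nd P \<nu> xh - {(\<lambda>k. 0)} \<and>
     (\<forall>y\<in>K \<nu> xh. 0 \<le> ip (nd \<nu>) z (\<lambda>k. y k - xh \<nu> k))" if nu: "\<nu> \<in> I" for \<nu>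
  proof -
    have xX: "xh \<in> Xminus I nd X \<nu>" using gne nu by (simp add: is_GNE_def)
    hence xp: "xh \<in> prof I nd" by (simp add: Xminus_def)
    have Ub: "Us nd P \<nu> xh \<subseteq> blk (nd \<nu>)" by (auto simp: Us_def)
    have Uc: "bconvex (Us nd P \<nu> xh)" using U_conv nu xp by blast
    have Ucl: "xh \<nu> \<in> bcl (nd \<nu>) (Us nd P \<nu> xh)" using U_cl nu xp by blast
    have Kb: "K \<nu> xh \<subseteq> blk (nd \<nu>)" using K_maps X_sub nu xX by blast
    have Kc: "bconvex (K \<nu> xh)" using K_vals nu xX by blast
    have xKv: "xh \<nu> \<in> K \<nu> xh" using xK nu by (simp add: Kprod_def)
    have disj: "Us nd P \<nu> xh \<inter> K \<nu> xh = {}" using gne nu by (auto simp: is_GNE_def Us_def)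
    obtain z where z: "z \<in> blk (nd \<nu>)" "z \<noteq> (\<lambda>j. 0)"
      "\<forall>y\<in>Us nd P \<nu> xh. ip (nd \<nu>) z (\<lambda>k. y k - xh \<nu> k) \<le> 0"
      "\<forall>y\<in>K \<nu> xh. 0 \<le> ip (nd \<nu>) z (\<lambda>k. y k - xh \<nu> k)"
      using player[OF Ub Uc Ucl Kb Kc xKv disj] by blast
    have "z \<in> Nnu nd P \<nu> xh" using z(1,3) by (auto simp: Nnu_def ncone_def)
    thus ?thesis using z by blast
  qed
  then obtain f where f: "\<And>\<nu>. \<nu> \<in> I \<Longrightarrow> f \<nu> \<in> Nnu nd P \<nu> xh - {(\<lambda>k. 0)} \<and>
     (\<forall>y\<in>K \<nu> xh. 0 \<le> ip (nd \<nu>) (f \<nu>) (\<lambda>k. y k - xh \<nu> k))" by metis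
  define xs where "xs = (\<lambda>\<nu>. if \<nu> \<in> I then f \<nu> else (\<lambda>k. 0))"
  have Nb: "Nnu nd P \<nu> xh \<subseteq> blk (nd \<nu>)" for \<nu> by (auto simp: Nnu_def ncone_def)
  have xsN: "xs \<in> N0 I nd P xh"
    unfolding N0_def prof_def xs_def using f Nb by auto
  have "\<forall>y\<in>Kprod I nd K xh. pip I nd xs (\<lambda>\<nu> k. y \<nu> k - xh \<nu> k) \<ge> 0"
  proof
    fix y assume y: "y \<in> Kprod I nd K xh"
    show "pip I nd xs (\<lambda>\<nu> k. y \<nu> k - xh \<nu> k) \<ge> 0"
      unfolding pip_def
    proof (rule sum_nonneg)
      fix \<nu> assume nu: "\<nu> \<in> I"
      have "y \<nu> \<in> K \<nu> xh" using y nu by (simp add: Kprod_def)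
      thus "0 \<le> ip (nd \<nu>) (xs \<nu>) (\<lambda>k. y \<nu> k - xh \<nu> k)" using f[OF nu] nu by (simp add: xs_def)
    qed
  qed
  thus ?thesis using xK xsN by blast
qed

end
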